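(* Let $q$ be an odd prime power and $\mathcal{L}'$ as in the context. Then there is no plane $\pi$ of $\mathrm{PG}(3,q)$ with $\mathsf{Line}(\pi)\subseteq\mathcal{L}'$ or $\mathsf{Line}(\pi)\cap\mathcal{L}'=\emptyset$, and there is no point $P$ with $\mathsf{Star}(P)\subseteq\mathcal{L}'$ or $\mathsf{Star}(P)\cap\mathcal{L}'=\emptyset$.
   Context: $\mathrm{PG}(3,q)$ is the 3-dimensional projective space over $\mathbb{F}_q$. $\mathsf{Star}(P)$ is the set of lines through the point $P$, $\mathsf{Line}(\pi)$ the set of lines in the plane $\pi$. Bruen-Drudge construction: $q$ odd, $\mathcal{Q}$ an elliptic quadric of $\mathrm{PG}(3,q)$ with quadratic form $\mathsf{Q}$. For $P\in\mathcal{Q}$, $\tau_P$ is the tangent plane at $P$ and the tangent lines at $P$ are the $q+1$ lines through $P$ in $\tau_P$. Each point $P'\neq P$ on such a tangent line is off $\mathcal{Q}$, and whether $\mathsf{Q}(v)$ is a nonzero square in $\mathbb{F}_q$ for a vector $v$ representing $P'$ is independent of the choice of $P'\ne P$ on the line and of $v$. Let $\mathcal{T}_P^1$ be the set of tangent lines at $P$ whose points $P'\ne P$ have $\mathsf{Q}(P')$ a square, and $\mathcal{T}_P^2$ the remaining tangent lines at $P$. Put $\mathcal{T}^i=\bigcup_{P\in\mathcal{Q}}\mathcal{T}_P^i$ ($i=1,2$), and let $\mathcal{S}$ be the set of secant lines (meeting $\mathcal{Q}$ in 2 points). The Bruen-Drudge line class is $\mathcal{L}=\mathcal{S}\cup\mathcal{T}^1$.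 Fix $P_1\in\mathcal{Q}$ and define the switched class $\mathcal{L}':=\bigl(\mathcal{L}\cup(\mathsf{Line}(\tau_{P_1})\setminus\mathsf{Star}(P_1))\bigr)\setminus(\mathsf{Star}(P_1)\setminus\mathsf{Line}(\tau_{P_1}))$. *)

theory Defs
  imports "HOL-Analysis.Finite_Cartesian_Product" "HOL-Library.Numeral_Type"
begin

text \<open>PG(3,q) over a finite field 'a with q = CARD('a) elements. Vectors live in 'a^4.
 Points, lines, planes of PG(3,q) are the 1-, 2-, 3-dimensional subspaces of 'a^4
 (represented as sets of vectors); incidence is inclusion.\<close>

type_synonym 'a vec4 = "'a ^ 4"

definition span1 :: "'a::field vec4 \<Rightarrow> 'a vec4 set" where
  "span1 u = {c *s u | c. True}"

definition span2 :: "'a::field vec4 \<Rightarrow> 'a vec4 \<Rightarrow> 'a vec4 set" where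
  "span2 u v = {a *s u + b *s v | a b. True}"

definition span3 :: "'a::field vec4 \<Rightarrow> 'a vec4 \<Rightarrow> 'a vec4 \<Rightarrow> 'a vec4 set" where
  "span3 u v w = {a *s u + b *s v + c *s w | a b c. True}"

definition indep2 :: "'a::field vec4 \<Rightarrow> 'a vec4 \<Rightarrow> bool" where
  "indep2 u v \<longleftrightarrow> (\<forall>a b. a *s u + b *s v = 0 \<longrightarrow> a = 0 \<and> b = 0)"

definition indep3 :: "'a::field vec4 \<Rightarrow> 'a vec4 \<Rightarrow> 'a vec4 \<Rightarrow> bool" where
  "indep3 u v w \<longleftrightarrow> (\<forall>a b c. a *s u + b *s v + c *s w = 0 \<longrightarrow> a = 0 \<and> b = 0 \<and> c = 0)"

definition pg_point :: "'a::field vec4 set \<Rightarrow> bool" where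
  "pg_point P \<longleftrightarrow> (\<exists>u. u \<noteq> 0 \<and> P = span1 u)"

definition pg_line :: "'a::field vec4 set \<Rightarrow> bool" where
  "pg_line l \<longleftrightarrow> (\<exists>u v. indep2 u v \<and> l = span2 u v)"

definition pg_plane :: "'a::field vec4 set \<Rightarrow> bool" where
  "pg_plane \<pi> \<longleftrightarrow> (\<exists>u v w. indep3 u v w \<and> \<pi> = span3 u v w)"

definition Star :: "'a::field vec4 set \<Rightarrow> 'a vec4 set set" where
  "Star P = {l. pg_line l \<and> P \<subseteq> l}"

definition Line :: "'a::field vec4 set \<Rightarrow> 'a vec4 set set" where
  "Line \<pi> = {l. pg_line l \<and> l \<subseteq> \<pi>}"

definition quadratic_form :: "('a::field vec4 \<Rightarrow> 'a) \<Rightarrow> bool" where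
  "quadratic_form Q \<longleftrightarrow> (\<exists>c :: 4 \<Rightarrow> 4 \<Rightarrow> 'a. \<forall>v. Q v = (\<Sum>i\<in>UNIV. \<Sum>j\<in>UNIV. c i j * v$i * v$j))"

definition polar :: "('a::field vec4 \<Rightarrow> 'a) \<Rightarrow> 'a vec4 \<Rightarrow> 'a vec4 \<Rightarrow> 'a" where
  "polar Q u w = Q (u + w) - Q u - Q w"

definition nondegenerate :: "('a::field vec4 \<Rightarrow> 'a) \<Rightarrow> bool" where
  "nondegenerate Q \<longleftrightarrow> (\<forall>u. (\<forall>w. polar Q u w = 0) \<longrightarrow> u = 0)"

definition elliptic_form :: "('a::field vec4 \<Rightarrow> 'a) \<Rightarrow> bool" where
  "elliptic_form Q \<longleftrightarrow> quadratic_form Q \<and> nondegenerate Q \<and>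
     \<not> (\<exists>l. pg_line l \<and> (\<forall>v\<in>l. Q v = 0))"

definition quadric_points :: "('a::field vec4 \<Rightarrow> 'a) \<Rightarrow> 'a vec4 set set" where
  "quadric_points Q = {P. pg_point P \<and> (\<forall>v\<in>P. Q v = 0)}"

definition tangent_plane :: "('a::field vec4 \<Rightarrow> 'a) \<Rightarrow> 'a vec4 set \<Rightarrow> 'a vec4 set" where
  "tangent_plane Q P = {w. \<forall>v\<in>P. polar Q v w = 0}"

definition tangent_lines :: "('a::field vec4 \<Rightarrow> 'a) \<Rightarrow> 'a vec4 set \<Rightarrow> 'a vec4 set set" where
  "tangent_lines Q P = Star P \<inter> Line (tangent_plane Q P)"

definition nz_square :: "'a::field \<Rightarrow> bool" where
  "nz_square x \<longleftrightarrow> x \<noteq> 0 \<and> (\<exists>c. x = c * c)"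

definition T1_at :: "('a::field vec4 \<Rightarrow> 'a) \<Rightarrow> 'a vec4 set \<Rightarrow> 'a vec4 set set" where
  "T1_at Q P = {l \<in> tangent_lines Q P. \<forall>v\<in>l. v \<notin> P \<longrightarrow> nz_square (Q v)}"

definition T1 :: "('a::field vec4 \<Rightarrow> 'a) \<Rightarrow> 'a vec4 set set" where
  "T1 Q = (\<Union>P\<in>quadric_points Q. T1_at Q P)"

definition secants :: "('a::field vec4 \<Rightarrow> 'a) \<Rightarrow> 'a vec4 set set" where
  "secants Q = {l. pg_line l \<and> card {P \<in> quadric_points Q. P \<subseteq> l} = 2}"

definition bruen_drudge :: "('a::field vec4 \<Rightarrow> 'a) \<Rightarrow> 'a vec4 set set" where
  "bruen_drudge Q = secants Q \<union> T1 Q"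

definition switched_class :: "('a::field vec4 \<Rightarrow> 'a) \<Rightarrow> 'a vec4 set \<Rightarrow> 'a vec4 set set" where
  "switched_class Q P1 =
     (bruen_drudge Q \<union> (Line (tangent_plane Q P1) - Star P1)) - (Star P1 - Line (tangent_plane Q P1))"

end

theory Submission
  imports Defs "HOL-Analysis.Cartesian_Space"
begin


lemma even_card_invol:
  assumes "finite A" "\<forall>x\<in>A. f x \<in> A \<and> f x \<noteq> x \<and> f (f x) = x"
  shows "even (card A)"
  using assms
proof (induct "card A" arbitrary: A rule: less_induct)
  case less
  show ?case
  proof (cases "A = {}")
    case True then show ?thesis by simp
  next
    case False
    then obtain x where x: "x \<in> A" by blast
    let ?B = "A - {x, f x}"
    have fx: "f x \<in> A" "f x \<noteq> x" using less.prems x by auto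
    have cB: "card ?B = card A - 2" using less.prems(1) x fx by (simp add: card_Diff_subset)
    have cA: "card A \<ge> 2"
    proof -
      have "{x, f x} \<subseteq> A" using x fx by auto
      then have "card {x, f x} \<le> card A" using less.prems(1) card_mono by blast
      then show ?thesis using fx by simp
    qed
    have "\<forall>y\<in>?B. f y \<in> ?B \<and> f y \<noteq> y \<and> f (f y) = y"
    proof
      fix y assume y: "y \<in> ?B"
      have "f y \<noteq> x" using y less.prems(2) by (metis Diff_iff insertCI)
      moreover have "f y \<noteq> f x" using y less.prems(2) x by (metis Diff_iff insertCI)
      ultimately show "f y \<in> ?B \<and> f y \<noteq> y \<and> f (f y) = y" using y less.prems(2) by auto
    qed
    moreover have "card ?B < card A" using cB cA by simp
    ultimately have "even (card ?B)" using less.hyps less.prems(1) by blast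
    then show ?thesis using cB cA by (metis add_diff_cancel_left' dvd_add_left_iff dvd_refl le_Suc_ex)
  qed
qed

lemma two_ne_zero_field:
  assumes "odd CARD('a::{finite,field})"
  shows "(2::'a) \<noteq> 0"
proof
  assume h: "(2::'a) = 0"
  have "\<forall>x\<in>(UNIV::'a set). x + 1 \<in> UNIV \<and> x + 1 \<noteq> x \<and> (x + 1) + 1 = x"
  proof
    fix x :: 'a
    have "(x + 1) + 1 = x + 2" by (metis add.assoc one_add_one)
    then show "x + 1 \<in> UNIV \<and> x + 1 \<noteq> x \<and> (x + 1) + 1 = x" using h by simp
  qed
  then have "even (card (UNIV::'a set))" using even_card_invol[of "UNIV::'a set" "\<lambda>x. x + 1"] by simp
  then show False using assms by simp
qed

definition sqs :: "'a::field set" where "sqs = range (\<lambda>x. x * x)"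

lemma card_sqs:
  assumes "odd CARD('a::{finite,field})"
  shows "CARD('a) + 1 \<le> 2 * card (sqs :: 'a set)"
proof -
  let ?S = "sqs :: 'a set"
  have "0 \<in> ?S" unfolding sqs_def by (metis mult_zero_left rangeI)
  have U: "(UNIV::'a set) = {0} \<union> (\<Union>s\<in>?S-{0}. {x. x * x = s})"
    unfolding sqs_def by auto
  have fib: "card {x::'a. x * x = s} \<le> 2" for s
  proof (cases "\<exists>x. x * x = s")
    case True
    then obtain x0 where x0: "x0 * x0 = s" by blast
    have "{x::'a. x * x = s} \<subseteq> {x0, -x0}"
    proof
      fix y assume "y \<in> {x::'a. x * x = s}"
      then have "(y - x0) * (y + x0) = 0" using x0 by (simp add: algebra_simps)
      then show "y \<in> {x0, -x0}" by (auto simp: add_eq_0_iff)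
    qed
    then have "card {x::'a. x * x = s} \<le> card {x0, -x0}" by (intro card_mono) auto
    also have "\<dots> \<le> 2" by (simp add: card_insert_le_m1)
    finally show ?thesis .
  next
    case False then show ?thesis by simp
  qed
  have "CARD('a) \<le> card {0::'a} + card (\<Union>s\<in>?S-{0}. {x. x * x = s})"
    by (subst U) (rule card_Un_le)
  also have "card (\<Union>s\<in>?S-{0}. {x. x * x = s}) \<le> (\<Sum>s\<in>?S-{0}. card {x. x * x = s})"
    by (rule card_UN_le) simp
  also have "\<dots> \<le> (\<Sum>s\<in>?S-{0}. 2)" by (rule sum_mono) (rule fib)
  also have "\<dots> = 2 * card (?S - {0})" by simp
  also have "card (?S - {0}) = card ?S - 1" using \<open>0 \<in> ?S\<close> by simp
  finally have "CARD('a) \<le> 1 + 2 * (card ?S - 1)" by simp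
  moreover have "card ?S \<ge> 1" using \<open>0 \<in> ?S\<close> by (metis card_0_eq empty_iff finite less_one not_le)
  ultimately show ?thesis by linarith
qed

lemma two_squares:
  assumes "odd CARD('a::{finite,field})" "(\<alpha>::'a) \<noteq> 0" "d \<noteq> 0"
  shows "\<exists>X y. \<alpha> * (X * X) + d * (y * y) = t"
proof (rule ccontr)
  assume nex: "\<not> ?thesis"
  let ?S = "sqs :: 'a set"
  let ?A = "(\<lambda>s. \<alpha> * s) ` ?S" and ?B = "(\<lambda>s. t - d * s) ` ?S"
  have dis: "?A \<inter> ?B = {}"
  proof (rule ccontr)
    assume "?A \<inter> ?B \<noteq> {}"
    then obtain X y where "\<alpha> * (X * X) = t - d * (y * y)" unfolding sqs_def by auto
    then have "\<alpha> * (X * X) + d * (y * y) = t" by (simp add: algebra_simps)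
    then show False using nex by blast
  qed
  have "card ?A = card ?S" using assms(2) by (intro card_image inj_onI) auto
  moreover have "card ?B = card ?S" using assms(3) by (intro card_image inj_onI) auto
  ultimately have "card (?A \<union> ?B) = 2 * card ?S" using dis by (simp add: card_Un_disjoint)
  moreover have "card (?A \<union> ?B) \<le> CARD('a)" by (rule card_mono) auto
  ultimately show False using card_sqs[OF assms(1)] by linarith
qed

definition nsq :: "'a::field \<Rightarrow> bool" where "nsq n \<longleftrightarrow> \<not> (\<exists>c. n = c * c)"

lemma exists_nsq:
  assumes "odd CARD('a::{finite,field})"
  shows "\<exists>n::'a. nsq n"
proof (rule ccontr)
  assume "\<not> ?thesis"
  then have "surj (\<lambda>x::'a. x * x)" unfolding nsq_def by (auto simp: surj_def)
  then have "inj (\<lambda>x::'a. x * x)" by (intro finite_UNIV_surj_inj) simp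
  moreover have "(\<lambda>x::'a. x * x) 1 = (\<lambda>x. x * x) (-1)" by simp
  ultimately have "(1::'a) = -1" by (rule injD)
  then have "(2::'a) = 0" by (metis add_eq_0_iff one_add_one)
  then show False using two_ne_zero_field[OF assms] by simp
qed

lemma nsq_nz: "nsq n \<Longrightarrow> n \<noteq> 0" unfolding nsq_def by auto
lemma nsq_not_nz_square: "nsq n \<Longrightarrow> \<not> nz_square n" unfolding nsq_def nz_square_def by auto



abbreviation B where "B Q \<equiv> polar Q"

lemma qf_sum:
  assumes "quadratic_form Q"
  obtains c where "\<And>v. Q v = (\<Sum>i\<in>UNIV. \<Sum>j\<in>UNIV. c i j * v$i * v$j)"
  using assms unfolding quadratic_form_def by blast

lemma polar_formula:
  assumes "\<And>v. Q v = (\<Sum>i\<in>UNIV. \<Sum>j\<in>UNIV. c i j * v$i * v$j)"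
  shows "polar Q u w = (\<Sum>i\<in>UNIV. \<Sum>j\<in>UNIV. c i j * (u$i * w$j + w$i * u$j))"
  unfolding polar_def assms
  by (simp add: sum_subtractf[symmetric] algebra_simps)

context fixes Q :: "'a::field vec4 \<Rightarrow> 'a" assumes qf: "quadratic_form Q"
begin

lemma Q_smult: "Q (a *s u) = a * a * Q u"
proof -
  obtain c where c: "\<And>v. Q v = (\<Sum>i\<in>UNIV. \<Sum>j\<in>UNIV. c i j * v$i * v$j)" using qf_sum[OF qf] by blast
  show ?thesis unfolding c by (simp add: sum_distrib_left algebra_simps)
qed

lemma Q_zero: "Q 0 = 0"
  using Q_smult[of 0 0] by simp

lemma polar_sym: "polar Q u w = polar Q w u"
  unfolding polar_def by (simp add: algebra_simps)

lemma polar_add2: "polar Q u (v + w) = polar Q u v + polar Q u w"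
proof -
  obtain c where c: "\<And>v. Q v = (\<Sum>i\<in>UNIV. \<Sum>j\<in>UNIV. c i j * v$i * v$j)" using qf_sum[OF qf] by blast
  show ?thesis unfolding polar_formula[OF c] by (simp add: sum.distrib[symmetric] algebra_simps)
qed

lemma polar_smult2: "polar Q u (a *s v) = a * polar Q u v"
proof -
  obtain c where c: "\<And>v. Q v = (\<Sum>i\<in>UNIV. \<Sum>j\<in>UNIV. c i j * v$i * v$j)" using qf_sum[OF qf] by blast
  show ?thesis unfolding polar_formula[OF c] by (simp add: sum_distrib_left algebra_simps)
qed

lemma polar_add1: "polar Q (v + w) u = polar Q v u + polar Q w u"
  using polar_add2 polar_sym by metis

lemma polar_smult1: "polar Q (a *s v) u = a * polar Q v u"
  using polar_smult2 polar_sym by metis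

lemma polar_zero2[simp]: "polar Q u 0 = 0"
  using polar_smult2[of u 0 0] by simp

lemma polar_zero1[simp]: "polar Q 0 u = 0"
  using polar_smult1[of 0 0 u] by simp

lemma Q_add: "Q (u + w) = Q u + Q w + polar Q u w"
  unfolding polar_def by simp

lemma polar_self: "polar Q u u = 2 * Q u"
  unfolding polar_def using Q_smult[of 2 u]
  by (simp add: scalar_mult_eq_scaleR) (metis (no_types) mult_2 one_add_one scaleR_2 vector_sadd_rdistrib vector_smult_lid Q_smult ring_distribs)

lemma Q_lin2: "Q (a *s u + b *s w) = a * a * Q u + b * b * Q w + a * b * polar Q u w"
  by (simp add: Q_add Q_smult polar_smult1 polar_smult2 algebra_simps)

lemma polar_lin2: "polar Q z (a *s u + b *s w) = a * polar Q z u + b * polar Q z w"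
  by (simp add: polar_add2 polar_smult2)

lemma polar_lin1: "polar Q (a *s u + b *s w) z = a * polar Q u z + b * polar Q w z"
  by (simp add: polar_add1 polar_smult1)

lemma polar_minus2: "polar Q u (v - w) = polar Q u v - polar Q u w"
  using polar_lin2[of u 1 v "-1" w] by (simp add: vector_sneg_minus1[symmetric])

lemma polar_minus1: "polar Q (v - w) u = polar Q v u - polar Q w u"
  using polar_minus2 polar_sym by metis

lemma Q_minus: "Q (u - w) = Q u + Q w - polar Q u w"
  using Q_lin2[of 1 u "-1" w] by (simp add: vector_sneg_minus1[symmetric])

end


lemma span1_mem: "c *s u \<in> span1 u" unfolding span1_def by blast
lemma span1_self: "u \<in> span1 u" using span1_mem[of 1 u] by simp
lemma span2_mem: "a *s u + b *s v \<in> span2 u v" unfolding span2_def by blast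
lemma span2_memE: "x \<in> span2 u v \<Longrightarrow> (\<And>a b. x = a *s u + b *s v \<Longrightarrow> thesis) \<Longrightarrow> thesis"
  unfolding span2_def by blast
lemma span2_l: "u \<in> span2 u v" using span2_mem[of 1 u 0 v] by simp
lemma span2_r: "v \<in> span2 u v" using span2_mem[of 0 u 1 v] by simp

lemma span1_sub_iff: "span1 u \<subseteq> span2 a b \<longleftrightarrow> u \<in> span2 a b"
proof
  assume "span1 u \<subseteq> span2 a b" then show "u \<in> span2 a b" using span1_self by blast
next
  assume "u \<in> span2 a b"
  then obtain x y where u: "u = x *s a + y *s b" by (rule span2_memE)
  show "span1 u \<subseteq> span2 a b"
  proof
    fix v assume "v \<in> span1 u"
    then obtain c where "v = c *s u" unfolding span1_def by blast
    then have "v = (c*x) *s a + (c*y) *s b" using u by (simp add: vector_add_ldistrib vector_smult_assoc)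
    then show "v \<in> span2 a b" using span2_mem by metis
  qed
qed

lemma span1_scale: "c \<noteq> 0 \<Longrightarrow> span1 (c *s u) = span1 u"
proof
  show "span1 (c *s u) \<subseteq> span1 u" unfolding span1_def by (auto simp: vector_smult_assoc)
next
  assume c: "c \<noteq> 0"
  show "span1 u \<subseteq> span1 (c *s u)"
  proof
    fix v assume "v \<in> span1 u"
    then obtain d where "v = d *s u" unfolding span1_def by blast
    then have "v = (d / c) *s (c *s u)" using c by (simp add: vector_smult_assoc)
    then show "v \<in> span1 (c *s u)" unfolding span1_def by blast
  qed
qed

lemma span2_sub: "span2 u v \<subseteq> S \<longleftrightarrow> (\<forall>a b. a *s u + b *s v \<in> S)"
  unfolding span2_def by blast

lemma pg_point_sub:
  assumes "pg_point P" "P \<subseteq> S"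
  obtains z where "z \<in> S" "z \<noteq> 0" "P = span1 z"
  using assms unfolding pg_point_def by (metis span1_self subsetD)

lemma indep2_line: "indep2 u v \<Longrightarrow> pg_line (span2 u v)"
  unfolding pg_line_def by blast

lemma indep2_nz: "indep2 u v \<Longrightarrow> u \<noteq> 0 \<and> v \<noteq> 0"
  unfolding indep2_def by (metis add.right_neutral add_0 vector_smult_lzero vector_smult_rzero zero_neq_one)

lemma span1_eq_imp: "span1 u = span1 v \<Longrightarrow> \<exists>c. u = c *s v"
  using span1_self unfolding span1_def by blast

locale ell =
  fixes Q :: "'a::{finite,field} vec4 \<Rightarrow> 'a" and p :: "'a vec4"
  assumes oddq: "odd CARD('a)" and ellQ: "elliptic_form Q" and p0: "p \<noteq> 0" and Qp: "Q p = 0"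
begin

lemma qf: "quadratic_form Q" using ellQ unfolding elliptic_form_def by simp

lemma nondeg: "(\<And>w. polar Q u w = 0) \<Longrightarrow> u = 0"
  using ellQ unfolding elliptic_form_def nondegenerate_def by blast

lemma two_nz: "(2::'a) \<noteq> 0" using two_ne_zero_field[OF oddq] .

lemmas Qlin = Q_lin2[OF qf] Q_smult[OF qf] Q_add[OF qf] Q_zero[OF qf] polar_lin1[OF qf] polar_lin2[OF qf]
   polar_sym[OF qf] polar_self[OF qf] polar_add1[OF qf] polar_add2[OF qf] polar_smult1[OF qf] polar_smult2[OF qf]
   polar_minus1[OF qf] polar_minus2[OF qf] Q_minus[OF qf] polar_zero1[OF qf] polar_zero2[OF qf]

lemma sing_line:
  assumes "indep2 a b" "Q a = 0" "Q b = 0" "polar Q a b = 0"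
  shows False
proof -
  have "\<forall>v\<in>span2 a b. Q v = 0"
    using assms by (auto elim!: span2_memE simp: Qlin)
  then show False using ellQ assms(1) unfolding elliptic_form_def pg_line_def by blast
qed

definition tau where "tau = {w. polar Q p w = 0}"

lemma tau_eq: "tangent_plane Q (span1 p) = tau"
  unfolding tangent_plane_def tau_def span1_def
  by (auto simp: polar_smult1[OF qf])

lemma sq_quadric: "span1 p \<in> quadric_points Q"
  unfolding quadric_points_def pg_point_def span1_def using p0 Qp by (auto simp: Qlin)

lemma quadric_pt: "P \<in> quadric_points Q \<Longrightarrow> pg_point P \<and> (\<forall>v\<in>P. Q v = 0)"
  unfolding quadric_points_def by simp

definition SC where "SC = switched_class Q (span1 p)"

lemma lines_L: "l \<in> bruen_drudge Q \<Longrightarrow> pg_line l"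
  unfolding bruen_drudge_def secants_def T1_def T1_at_def tangent_lines_def Star_def by auto

lemma SC_iff: "pg_line l \<Longrightarrow> l \<in> SC \<longleftrightarrow>
   (l \<in> secants Q \<or> l \<in> T1 Q \<or> (l \<subseteq> tau \<and> \<not> span1 p \<subseteq> l)) \<and> \<not> (span1 p \<subseteq> l \<and> \<not> l \<subseteq> tau)"
  unfolding SC_def switched_class_def bruen_drudge_def by (simp add: Line_def Star_def tau_eq)

lemma sub_tau: "span2 a b \<subseteq> tau \<longleftrightarrow> polar Q p a = 0 \<and> polar Q p b = 0"
proof
  assume "span2 a b \<subseteq> tau" then show "polar Q p a = 0 \<and> polar Q p b = 0"
    using span2_l span2_r unfolding tau_def by blast
next
  assume "polar Q p a = 0 \<and> polar Q p b = 0" then show "span2 a b \<subseteq> tau"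
    unfolding tau_def by (auto elim!: span2_memE simp: Qlin)
qed

lemma not_sub_tau: "v \<in> l \<Longrightarrow> polar Q p v \<noteq> 0 \<Longrightarrow> \<not> l \<subseteq> tau"
  unfolding tau_def by blast

lemma out_removed:
  assumes "pg_line l" "p \<in> l" "v \<in> l" "polar Q p v \<noteq> 0"
  shows "l \<notin> SC"
proof -
  obtain a b where "l = span2 a b" using assms(1) unfolding pg_line_def by blast
  then have "span1 p \<subseteq> l" using assms(2) span1_sub_iff by blast
  then show ?thesis using SC_iff[OF assms(1)] not_sub_tau[OF assms(3,4)] by blast
qed

lemma passant_notL:
  assumes "\<forall>v\<in>l. Q v = 0 \<longrightarrow> v = 0"
  shows "l \<notin> secants Q" "l \<notin> T1 Q"
proof -
  have e: "{P \<in> quadric_points Q. P \<subseteq> l} = {}"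
  proof (rule ccontr)
    assume "\<not> ?thesis"
    then obtain P where P: "P \<in> quadric_points Q" "P \<subseteq> l" by blast
    then obtain z where "z \<in> l" "z \<noteq> 0" "P = span1 z" using quadric_pt pg_point_sub by metis
    then show False using P quadric_pt assms span1_self by blast
  qed
  then show "l \<notin> secants Q" unfolding secants_def by (simp add: e)
  show "l \<notin> T1 Q"
  proof
    assume "l \<in> T1 Q"
    then obtain P where "P \<in> quadric_points Q" "l \<in> T1_at Q P" unfolding T1_def by blast
    then have "P \<in> quadric_points Q" "P \<subseteq> l" unfolding T1_at_def tangent_lines_def Star_def by auto
    then show False using e by blast
  qed
qed

lemma notT1_witness:
  assumes "v \<in> l" "Q v \<noteq> 0" "\<not> nz_square (Q v)"
  shows "l \<notin> T1 Q"
proof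
  assume "l \<in> T1 Q"
  then obtain P where "P \<in> quadric_points Q" "l \<in> T1_at Q P" unfolding T1_def by blast
  moreover have "v \<notin> P" using calculation(1) quadric_pt assms(2) by blast
  ultimately show False using assms unfolding T1_at_def by blast
qed

lemma out_bad:
  assumes "pg_line l" "l \<notin> secants Q" "l \<notin> T1 Q" "\<not> l \<subseteq> tau"
  shows "l \<notin> SC"
  using SC_iff[OF assms(1)] assms by blast

lemma out_passant:
  assumes "pg_line l" "\<forall>v\<in>l. Q v = 0 \<longrightarrow> v = 0" "\<not> l \<subseteq> tau"
  shows "l \<notin> SC"
  using out_bad passant_notL assms by blast

lemma tangent_notsec:
  assumes "indep2 e w" "Q e = 0" "polar Q e w = 0" "Q w \<noteq> 0"
  shows "span2 e w \<notin> secants Q"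
proof -
  have "{P \<in> quadric_points Q. P \<subseteq> span2 e w} \<subseteq> {span1 e}"
  proof
    fix P assume "P \<in> {P \<in> quadric_points Q. P \<subseteq> span2 e w}"
    then have P: "P \<in> quadric_points Q" "P \<subseteq> span2 e w" by auto
    then obtain z where z: "z \<in> span2 e w" "z \<noteq> 0" "P = span1 z" using quadric_pt pg_point_sub by metis
    from z(1) obtain a b where ab: "z = a *s e + b *s w" by (rule span2_memE)
    have "Q z = 0" using P z quadric_pt span1_self by blast
    then have "b * b * Q w = 0" using ab assms by (simp add: Qlin)
    then have "b = 0" using assms(4) by simp
    then have "a \<noteq> 0" using ab z by auto
    then show "P \<in> {span1 e}" using z ab \<open>b = 0\<close> span1_scale by simp
  qed
  then have "card {P \<in> quadric_points Q. P \<subseteq> span2 e w} \<le> card {span1 e}"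
    by (intro card_mono) auto
  then have "card {P \<in> quadric_points Q. P \<subseteq> span2 e w} \<le> 1" by simp
  then show ?thesis unfolding secants_def by simp
qed

lemma out_tangent:
  assumes "indep2 e w" "Q e = 0" "polar Q e w = 0" "nsq (Q w)" "\<not> span2 e w \<subseteq> tau"
  shows "span2 e w \<notin> SC"
  using out_bad[OF indep2_line[OF assms(1)] tangent_notsec notT1_witness[OF span2_r] assms(5)]
    assms nsq_nz nsq_not_nz_square by blast

lemma in_added:
  assumes "indep2 a b" "polar Q p a = 0" "polar Q p b = 0" "p \<notin> span2 a b"
  shows "span2 a b \<in> SC"
  using SC_iff[OF indep2_line[OF assms(1)]] sub_tau assms span1_sub_iff by blast

lemma in_secant:
  assumes "pg_line l" "l \<in> secants Q" "p \<notin> l"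
  shows "l \<in> SC"
  using SC_iff[OF assms(1)] assms span1_self by blast

lemma in_T1:
  assumes "indep2 p w" "polar Q p w = 0" "nz_square (Q w)"
  shows "span2 p w \<in> SC"
proof -
  have l: "pg_line (span2 p w)" using indep2_line[OF assms(1)] .
  have st: "span1 p \<subseteq> span2 p w" using span1_sub_iff span2_l by blast
  have tt: "span2 p w \<subseteq> tau" using sub_tau assms(2) Qp polar_self[OF qf] by simp
  have "span2 p w \<in> T1_at Q (span1 p)"
    unfolding T1_at_def tangent_lines_def Star_def Line_def tau_eq
  proof (intro CollectI conjI IntI ballI impI)
    fix v assume v: "v \<in> span2 p w" "v \<notin> span1 p"
    from v(1) obtain a b where ab: "v = a *s p + b *s w" by (rule span2_memE)
    have "b \<noteq> 0"
    proof
      assume "b = 0" then have "v = a *s p" using ab by simp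
      then show False using v(2) span1_mem[of a p] by simp
    qed
    have "Q v = b * b * Q w" using ab assms Qp by (simp add: Qlin)
    then show "nz_square (Q v)" using assms(3) \<open>b \<noteq> 0\<close> unfolding nz_square_def
      by (metis mult.assoc mult.left_commute no_zero_divisors)
  qed (use l st tt in auto)
  then have "span2 p w \<in> T1 Q" unfolding T1_def using sq_quadric by blast
  then show ?thesis using SC_iff[OF l] tt by blast
qed

end


lemma kernel_nz:
  fixes L :: "'c::{finite,ab_group_add} \<Rightarrow> 'd::{finite,ab_group_add}"
  assumes "\<And>x y. L (x - y) = L x - L y" "CARD('d) < CARD('c)"
  shows "\<exists>x. x \<noteq> 0 \<and> L x = 0"
proof -
  have "\<not> inj L"
  proof
    assume "inj L"
    then have "card (L ` UNIV) = CARD('c)" by (simp add: card_image)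
    moreover have "card (L ` UNIV) \<le> CARD('d)" by (rule card_mono) auto
    ultimately show False using assms(2) by simp
  qed
  then obtain x y where "x \<noteq> y" "L x = L y" unfolding inj_def by blast
  then show ?thesis using assms(1)[of x y] by (intro exI[of _ "x - y"]) simp
qed

definition addv :: "('c::ab_group_add \<Rightarrow> 'a::ab_group_add) \<Rightarrow> bool" where
  "addv f \<longleftrightarrow> (\<forall>x y. f (x - y) = f x - f y)"

lemma card_ge2: "CARD('a::{finite,field}) \<ge> 2"
proof -
  have "card {0::'a, 1} \<le> CARD('a)" by (intro card_mono) auto
  then show ?thesis by simp
qed

lemma pow_lt: "(2::nat) \<le> q \<Longrightarrow> q ^ m < q ^ n \<longleftrightarrow> m < n"
  by (simp add: power_strict_increasing_iff)

lemma ker3: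
  fixes f g h :: "'a::{finite,field} ^ 'n::finite \<Rightarrow> 'a"
  assumes "addv f" "addv g" "addv h" "CARD('n) > 3"
  shows "\<exists>v. v \<noteq> 0 \<and> f v = 0 \<and> g v = 0 \<and> h v = 0"
proof -
  let ?L = "\<lambda>v. (\<chi> i::3. if i = 1 then f v else if i = 2 then g v else h v)"
  have "CARD('a ^ 3) < CARD('a ^ 'n)" using card_ge2[where 'a='a] assms(4) by (simp add: pow_lt)
  moreover have "?L (x - y) = ?L x - ?L y" for x y
    using assms(1-3) unfolding addv_def by (simp add: vec_eq_iff)
  ultimately obtain v where "v \<noteq> 0" "?L v = 0" using kernel_nz[of ?L] by blast
  moreover have "f v = ?L v $ 1" "g v = ?L v $ 2" "h v = ?L v $ 3" by simp_all
  ultimately show ?thesis by auto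
qed

lemma ker2:
  fixes f g :: "'a::{finite,field} ^ 'n::finite \<Rightarrow> 'a"
  assumes "addv f" "addv g" "CARD('n) > 2"
  shows "\<exists>v. v \<noteq> 0 \<and> f v = 0 \<and> g v = 0"
proof -
  let ?L = "\<lambda>v. (\<chi> i::2. if i = 1 then f v else g v)"
  have "CARD('a ^ 2) < CARD('a ^ 'n)" using card_ge2[where 'a='a] assms(3) by (simp add: pow_lt)
  moreover have "?L (x - y) = ?L x - ?L y" for x y
    using assms(1-2) unfolding addv_def by (simp add: vec_eq_iff)
  ultimately obtain v where "v \<noteq> 0" "?L v = 0" using kernel_nz[of ?L] by blast
  moreover have "f v = ?L v $ 1" "g v = ?L v $ 2" by simp_all
  ultimately show ?thesis by auto
qed

lemma addv_comp: "addv (\<lambda>v::'a::field^'n. v $ i)"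
  unfolding addv_def by simp

lemma ker2_4_indep:
  fixes f g :: "'a::{finite,field} ^ 4 \<Rightarrow> 'a"
  assumes "addv f" "addv g"
  shows "\<exists>u v. indep2 u v \<and> f u = 0 \<and> g u = 0 \<and> f v = 0 \<and> g v = 0"
proof -
  obtain u where u: "u \<noteq> 0" "f u = 0" "g u = 0" using ker3[OF assms assms(2)] by auto
  then obtain i where i: "u $ i \<noteq> 0" by (metis vec_eq_iff zero_index)
  obtain v where v: "v \<noteq> 0" "f v = 0" "g v = 0" "v $ i = 0"
    using ker3[OF assms addv_comp[of i]] by auto
  have "indep2 u v" unfolding indep2_def
  proof (intro allI impI)
    fix a b assume h: "a *s u + b *s v = 0"
    then have "(a *s u + b *s v) $ i = 0" by simp
    then have "a = 0" using i v(4) by simp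
    then show "a = 0 \<and> b = 0" using h v(1) by simp
  qed
  then show ?thesis using u v by blast
qed

definition comb3 :: "'a::field vec4 \<Rightarrow> 'a vec4 \<Rightarrow> 'a vec4 \<Rightarrow> 'a^3 \<Rightarrow> 'a vec4" where
  "comb3 u v w c = c$1 *s u + c$2 *s v + c$3 *s w"

lemma comb3_diff: "comb3 u v w (x - y) = comb3 u v w x - comb3 u v w y"
  unfolding comb3_def by (simp add: vector_sub_rdistrib algebra_simps)

lemma comb3_lin: "comb3 u v w (a *s x + b *s y) = a *s comb3 u v w x + b *s comb3 u v w y"
  unfolding comb3_def by (simp add: vector_sadd_rdistrib vector_add_ldistrib vector_smult_assoc algebra_simps)

lemma comb3_in: "comb3 u v w c \<in> span3 u v w"
  unfolding comb3_def span3_def by blast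

lemma span3_comb: "x \<in> span3 u v w \<Longrightarrow> \<exists>c. x = comb3 u v w c"
  unfolding span3_def comb3_def
  by clarify (rule_tac x="vector [a, b, c]" in exI, simp)

lemma comb3_nz: "indep3 u v w \<Longrightarrow> c \<noteq> 0 \<Longrightarrow> comb3 u v w c \<noteq> 0"
  unfolding indep3_def comb3_def
  by (metis (no_types, lifting) exhaust_3 vec_eq_iff zero_index)

lemma addv_o: "(\<And>x y. f (x - y) = f x - f y) \<Longrightarrow> addv (\<lambda>c. f (comb3 u v w c))"
  unfolding addv_def by (simp add: comb3_diff)

lemma kerP2:
  fixes f g :: "'a::{finite,field} vec4 \<Rightarrow> 'a"
  assumes "indep3 u v w" "\<And>x y. f (x - y) = f x - f y" "\<And>x y. g (x - y) = g x - g y"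
  shows "\<exists>x\<in>span3 u v w. x \<noteq> 0 \<and> f x = 0 \<and> g x = 0"
proof -
  obtain c :: "'a^3" where "c \<noteq> 0" "f (comb3 u v w c) = 0" "g (comb3 u v w c) = 0"
    using ker2[OF addv_o[where u=u and v=v and w=w, OF assms(2)] addv_o[where u=u and v=v and w=w, OF assms(3)]] by auto
  then show ?thesis using comb3_in comb3_nz[OF assms(1)] by blast
qed

lemma kerP1_indep:
  fixes f :: "'a::{finite,field} vec4 \<Rightarrow> 'a"
  assumes "indep3 u v w" "\<And>x y. f (x - y) = f x - f y"
  shows "\<exists>x y. x \<in> span3 u v w \<and> y \<in> span3 u v w \<and> indep2 x y \<and> f x = 0 \<and> f y = 0"
proof -
  obtain c :: "'a^3" where c: "c \<noteq> 0" "f (comb3 u v w c) = 0"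
    using ker2[OF addv_o[where u=u and v=v and w=w, OF assms(2)] addv_o[where u=u and v=v and w=w, OF assms(2)]] by auto
  then obtain i where i: "c $ i \<noteq> 0" by (metis vec_eq_iff zero_index)
  obtain d :: "'a^3" where d: "d \<noteq> 0" "f (comb3 u v w d) = 0" "d $ i = 0"
    using ker2[OF addv_o[where u=u and v=v and w=w, OF assms(2)] addv_comp[of i]] by auto
  have "indep2 (comb3 u v w c) (comb3 u v w d)" unfolding indep2_def
  proof (intro allI impI)
    fix a b assume h: "a *s comb3 u v w c + b *s comb3 u v w d = 0"
    then have "comb3 u v w (a *s c + b *s d) = 0" by (simp add: comb3_lin)
    then have "a *s c + b *s d = 0" using comb3_nz[OF assms(1)] by blast
    then have "(a *s c + b *s d) $ i = 0" by simp
    then have "a = 0" using i d(3) by simp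
    then show "a = 0 \<and> b = 0" using h d(1) comb3_nz[OF assms(1) d(1)] by simp
  qed
  then show ?thesis using c d comb3_in by blast
qed



definition subsp :: "'a::field vec4 set \<Rightarrow> bool" where
  "subsp S \<longleftrightarrow> (\<forall>a b x y. x \<in> S \<longrightarrow> y \<in> S \<longrightarrow> a *s x + b *s y \<in> S)"

lemma subsp_span3: "subsp (span3 u v w)"
  unfolding subsp_def
proof (intro allI impI)
  fix a b x y assume "x \<in> span3 u v w" "y \<in> span3 u v w"
  then obtain a1 b1 c1 a2 b2 c2 where "x = a1 *s u + b1 *s v + c1 *s w" "y = a2 *s u + b2 *s v + c2 *s w"
    unfolding span3_def by blast
  then have "a *s x + b *s y = (a*a1 + b*a2) *s u + (a*b1+b*b2) *s v + (a*c1+b*c2) *s w"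
    by (simp add: vec_eq_iff algebra_simps)
  then show "a *s x + b *s y \<in> span3 u v w" unfolding span3_def by blast
qed

lemma subsp_UNIV: "subsp UNIV" unfolding subsp_def by simp

lemma subsp_scale: "subsp S \<Longrightarrow> x \<in> S \<Longrightarrow> c *s x \<in> S"
  unfolding subsp_def by (metis add.right_neutral vector_smult_lzero)

lemma subsp_add: "subsp S \<Longrightarrow> x \<in> S \<Longrightarrow> y \<in> S \<Longrightarrow> x + y \<in> S"
  unfolding subsp_def by (metis vector_smult_lid)

lemma subsp_diff: "subsp S \<Longrightarrow> x \<in> S \<Longrightarrow> y \<in> S \<Longrightarrow> x - y \<in> S"
  unfolding subsp_def by (metis diff_conv_add_uminus vector_smult_lid vector_sneg_minus1)

lemma subsp_span2: "subsp S \<Longrightarrow> x \<in> S \<Longrightarrow> y \<in> S \<Longrightarrow> span2 x y \<subseteq> S"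
  unfolding subsp_def span2_def by blast

lemma span3_gens: "u \<in> span3 u v w" "v \<in> span3 u v w" "w \<in> span3 u v w"
proof -
  have "u = 1 *s u + 0 *s v + 0 *s w" "v = 0 *s u + 1 *s v + 0 *s w" "w = 0 *s u + 0 *s v + 1 *s w" by simp_all
  then show "u \<in> span3 u v w" "v \<in> span3 u v w" "w \<in> span3 u v w" unfolding span3_def by blast+
qed

lemma indep2_sym: "indep2 u v \<Longrightarrow> indep2 v u"
  unfolding indep2_def by (metis add.commute)

context ell begin

lemma four_nz: "(4::'a) \<noteq> 0"
proof -
  have e: "(2::'a) * 2 = 4" by simp
  show ?thesis using two_nz by (metis e mult_eq_0_iff)
qed

lemma eight_nz: "(8::'a) \<noteq> 0"
proof -
  have e: "(2::'a) * 4 = 8" by simp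
  show ?thesis using two_nz four_nz by (metis e mult_eq_0_iff)
qed

lemma Bpp: "polar Q p p = 0" using Qlin Qp by simp

lemma polar_sing: "Q e = 0 \<Longrightarrow> polar Q e e = 0" using Qlin by simp

lemma indep_by:
  assumes "polar Q z x = 0" "polar Q z y \<noteq> 0" "x \<noteq> 0"
  shows "indep2 x y"
  unfolding indep2_def
proof (intro allI impI)
  fix a b assume h: "a *s x + b *s y = 0"
  then have "polar Q z (a *s x + b *s y) = 0" by (simp add: Qlin)
  then have "b = 0" using assms by (simp add: Qlin)
  then show "a = 0 \<and> b = 0" using h assms(3) by simp
qed

lemma sing_perp:
  assumes "Q e = 0" "e \<noteq> 0" "Q w = 0" "polar Q e w = 0"
  shows "\<exists>k. w = k *s e"
proof (rule ccontr)
  assume nk: "\<not> ?thesis"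
  have "indep2 e w" unfolding indep2_def
  proof (intro allI impI)
    fix a b assume h: "a *s e + b *s w = 0"
    show "a = 0 \<and> b = 0"
    proof (cases "b = 0")
      case True then show ?thesis using h assms(2) by simp
    next
      case False
      then have "w = (- a / b) *s e" using h
        by (simp add: vec_eq_iff field_simps) (metis add_eq_0_iff mult.commute)
      then show ?thesis using nk by blast
    qed
  qed
  then show False using sing_line assms by blast
qed

lemma partner: "e \<noteq> 0 \<Longrightarrow> \<exists>z. polar Q e z \<noteq> 0"
  using nondeg by blast

definition aniso where "aniso u v \<longleftrightarrow> (\<forall>a b. Q (a *s u + b *s v) = 0 \<longrightarrow> a = 0 \<and> b = 0)"

lemma aniso_rep:
  assumes "aniso u v" "t \<noteq> 0"
  shows "\<exists>x y. Q (x *s u + y *s v) = t"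
proof -
  let ?\<alpha> = "Q u" and ?\<beta> = "polar Q u v" and ?\<gamma> = "Q v"
  have a0: "?\<alpha> \<noteq> 0"
  proof
    assume "Q u = 0" then have "Q (1 *s u + 0 *s v) = 0" by simp
    then have "(1::'a) = 0 \<and> (0::'a) = 0" using assms(1) unfolding aniso_def by blast
    then show False by simp
  qed
  have QQ: "Q (x *s u + y *s v) = ?\<alpha> * (x*x) + ?\<beta> * x * y + ?\<gamma> * (y*y)" for x y
    by (simp add: Q_lin2[OF qf] algebra_simps)
  define d where "d = ?\<gamma> - ?\<beta> * ?\<beta> / (4 * ?\<alpha>)"
  have 4: "(4::'a) \<noteq> 0" proof -
    have e: "(2::'a) * 2 = 4" by simp
    show ?thesis using two_nz by (metis e mult_eq_0_iff)
  qed
  have d0: "d \<noteq> 0"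
  proof
    assume "d = 0"
    have "Q ((- ?\<beta> / (2 * ?\<alpha>)) *s u + 1 *s v) = d"
      unfolding QQ d_def using a0 two_nz four_nz eight_nz
      by (simp add: field_simps)
    then show False using assms(1) \<open>d = 0\<close> unfolding aniso_def by (metis zero_neq_one)
  qed
  obtain X y where Xy: "?\<alpha> * (X * X) + d * (y * y) = t" using two_squares[OF oddq a0 d0] by blast
  have "Q ((X - ?\<beta> * y / (2 * ?\<alpha>)) *s u + y *s v) = t"
    unfolding QQ Xy[symmetric] d_def using a0 two_nz four_nz eight_nz
    by (simp add: field_simps)
  then show ?thesis by blast
qed

lemma aniso_nz: "aniso u v \<Longrightarrow> Q (a *s u + b *s v) \<noteq> 0 \<Longrightarrow> a *s u + b *s v \<noteq> 0"
  using Q_zero[OF qf] by metis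

lemma secant_gen:
  assumes "pg_line l" "w1 \<in> l" "w2 \<in> l" "Q w1 = 0" "Q w2 = 0" "polar Q w1 w2 \<noteq> 0"
    and sp: "\<forall>z\<in>l. \<exists>a b. z = a *s w1 + b *s w2"
  shows "l \<in> secants Q"
proof -
  obtain z1 z2 where l: "indep2 z1 z2" "l = span2 z1 z2" using assms(1) unfolding pg_line_def by blast
  have w0: "w1 \<noteq> 0" "w2 \<noteq> 0" using assms(6) by (auto simp: Qlin)
  have qp: "span1 w \<in> quadric_points Q" if "Q w = 0" "w \<noteq> 0" for w
    unfolding quadric_points_def pg_point_def span1_def using that by (auto simp: Qlin)
  have "{P \<in> quadric_points Q. P \<subseteq> l} = {span1 w1, span1 w2}"
  proof (intro equalityI subsetI)
    fix P assume "P \<in> {P \<in> quadric_points Q. P \<subseteq> l}"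
    then have P: "P \<in> quadric_points Q" "P \<subseteq> l" by auto
    then obtain z where z: "z \<in> l" "z \<noteq> 0" "P = span1 z" using quadric_pt pg_point_sub by metis
    have Qz: "Q z = 0" using P z quadric_pt span1_self by blast
    obtain a b where ab: "z = a *s w1 + b *s w2" using sp z(1) by blast
    have "Q z = a * b * polar Q w1 w2" using ab assms(4,5) by (simp add: Qlin)
    then have "a * b * polar Q w1 w2 = 0" using Qz by simp
    then have "a = 0 \<or> b = 0" using assms(6) by simp
    then show "P \<in> {span1 w1, span1 w2}"
    proof
      assume a: "a = 0"
      then have "b \<noteq> 0" using ab z by auto
      then have "P = span1 w2" using z ab a by (simp add: span1_scale)
      then show ?thesis by simp
    next
      assume b: "b = 0"
      then have "a \<noteq> 0" using ab z by auto
      then have "P = span1 w1" using z ab b by (simp add: span1_scale)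
      then show ?thesis by simp
    qed
  next
    fix P assume "P \<in> {span1 w1, span1 w2}"
    moreover have "span1 w1 \<subseteq> l" "span1 w2 \<subseteq> l" using assms(2,3) l(2) span1_sub_iff by auto
    ultimately show "P \<in> {P \<in> quadric_points Q. P \<subseteq> l}"
      using qp assms(4,5) w0 by auto
  qed
  moreover have "span1 w1 \<noteq> span1 w2"
  proof
    assume "span1 w1 = span1 w2"
    then obtain c where "w1 = c *s w2" using span1_eq_imp by blast
    then show False using assms(5,6) by (simp add: Qlin)
  qed
  ultimately show ?thesis unfolding secants_def using assms(1) by simp
qed

lemma secant_hyp:
  assumes "indep2 z1 z2" "Q z1 = 0" "Q z2 = 0" "polar Q z1 z2 \<noteq> 0"
  shows "span2 z1 z2 \<in> secants Q"
  by (rule secant_gen[OF indep2_line[OF assms(1)] span2_l span2_r assms(2-4)])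
     (unfold span2_def, blast)

lemma secant_diff:
  assumes "indep2 z1 z2" "Q z2 = - Q z1" "polar Q z1 z2 = 0" "Q z1 \<noteq> 0"
  shows "span2 z1 z2 \<in> secants Q"
proof (rule secant_gen[OF indep2_line[OF assms(1)]])
  show "z1 + z2 \<in> span2 z1 z2" using span2_mem[of 1 z1 1 z2] by simp
  show "z1 - z2 \<in> span2 z1 z2" using span2_mem[of 1 z1 "-1" z2] by (simp add: vector_sneg_minus1[symmetric])
  show "Q (z1 + z2) = 0" using assms by (simp add: Qlin)
  show "Q (z1 - z2) = 0" using assms by (simp add: Qlin)
  have "polar Q (z1 + z2) (z1 - z2) = 4 * Q z1" using assms
    by (simp add: Qlin)
  moreover have "(4::'a) \<noteq> 0" proof -
    have e: "(2::'a) * 2 = 4" by simp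
    show ?thesis using two_nz by (metis e mult_eq_0_iff)
  qed
  ultimately show "polar Q (z1 + z2) (z1 - z2) \<noteq> 0" using assms(4) by simp
  show "\<forall>z\<in>span2 z1 z2. \<exists>a b. z = a *s (z1 + z2) + b *s (z1 - z2)"
  proof
    fix z assume "z \<in> span2 z1 z2"
    then obtain a b where "z = a *s z1 + b *s z2" by (rule span2_memE)
    have g: "x1 *s (z1 + z2) + x2 *s (z1 - z2) = (x1 + x2) *s z1 + (x1 - x2) *s z2" for x1 x2
      by (simp add: vec_eq_iff algebra_simps)
    have c1: "(a + b) / 2 + (a - b) / 2 = a" using two_nz by (simp add: field_simps)
    have c2: "(a + b) / 2 - (a - b) / 2 = b" using two_nz four_nz by (simp add: field_simps)
    have "z = ((a + b) / 2) *s (z1 + z2) + ((a - b) / 2) *s (z1 - z2)"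
      unfolding g c1 c2 by fact
    then show "\<exists>a b. z = a *s (z1 + z2) + b *s (z1 - z2)" by blast
  qed
qed

end


context ell begin

lemma hyp_partner:
  assumes S: "subsp S" "e \<in> S" "z \<in> S" "f \<in> S"
    and "Q e = 0" "polar Q e z \<noteq> 0" "polar Q e f = 0" "Q f \<noteq> 0"
  shows "\<exists>g\<in>S. polar Q e g = 1 \<and> polar Q f g = 0 \<and> Q g = 0"
proof -
  define z1 where "z1 = (1 / polar Q e z) *s z"
  have z1: "polar Q e z1 = 1" "z1 \<in> S" using assms subsp_scale unfolding z1_def by (auto simp: Qlin)
  define z2 where "z2 = z1 - (polar Q f z1 / (2 * Q f)) *s f"
  have z2: "polar Q e z2 = 1" "polar Q f z2 = 0"
    using z1 assms two_nz unfolding z2_def by (auto simp: Qlin)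
  have "z2 \<in> S" unfolding z2_def by (rule subsp_diff[OF S(1) z1(2) subsp_scale[OF S(1) S(4)]])
  note z2 = z2 this
  define g where "g = z2 - Q z2 *s e"
  have "g \<in> S" unfolding g_def by (rule subsp_diff[OF S(1) z2(3) subsp_scale[OF S(1) S(2)]])
  moreover have "polar Q e g = 1" "polar Q f g = 0" "Q g = 0"
    using z2 assms unfolding g_def
    by (auto simp: Qlin polar_minus2[OF qf] polar_smult2[OF qf] Q_minus[OF qf])
  ultimately show ?thesis by blast
qed

lemma not_both_mult: "indep2 x y \<Longrightarrow> x = c *s e \<Longrightarrow> y = d *s e \<Longrightarrow> False"
proof -
  assume h: "indep2 x y" "x = c *s e" "y = d *s e"
  then have "x \<noteq> 0" "y \<noteq> 0" using indep2_nz by blast+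
  then have "c \<noteq> 0" using h by auto
  have "d *s x + (- c) *s y = 0" unfolding h(2) h(3) by (simp add: vec_eq_iff algebra_simps)
  then have "d = 0 \<and> - c = 0" using h(1) unfolding indep2_def by blast
  then show False using \<open>c \<noteq> 0\<close> by simp
qed

lemma aniso_I:
  assumes "indep2 u v" "polar Q p u = 0" "polar Q p v = 0"
    and k: "\<And>a b k. a *s u + b *s v = k *s p \<Longrightarrow> k = 0"
  shows "aniso u v"
  unfolding aniso_def
proof (intro allI impI)
  fix a b assume "Q (a *s u + b *s v) = 0"
  moreover have "polar Q p (a *s u + b *s v) = 0" using assms by (simp add: Qlin)
  ultimately obtain k where "a *s u + b *s v = k *s p" using sing_perp[OF Qp p0] by blast
  then have "a *s u + b *s v = 0" using k by (metis vector_smult_lzero)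
  then show "a = 0 \<and> b = 0" using assms(1) unfolding indep2_def by blast
qed

lemma passant_lemma:
  assumes "polar Q x y = 0" "Q x \<noteq> 0" "Q y = - (n * Q x)" "nsq n"
  shows "\<forall>v\<in>span2 x y. Q v = 0 \<longrightarrow> v = 0"
proof (intro ballI impI)
  fix v assume "v \<in> span2 x y" "Q v = 0"
  then obtain a b where ab: "v = a *s x + b *s y" by (auto elim: span2_memE)
  have "Q v = Q x * (a * a - n * (b * b))" using ab assms by (simp add: Qlin algebra_simps)
  then have e: "a * a = n * (b * b)" using \<open>Q v = 0\<close> assms(2) by simp
  have "b = 0"
  proof (rule ccontr)
    assume "b \<noteq> 0"
    then have "n = (a / b) * (a / b)" using e by (simp add: field_simps)
    then show False using assms(4) unfolding nsq_def by blast
  qed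
  then have "a = 0" using e by simp
  then show "v = 0" using ab \<open>b = 0\<close> by simp
qed

lemma out_tangentP1:
  assumes "indep2 p w" "polar Q p w = 0" "nsq (Q w)"
  shows "span2 p w \<notin> SC"
proof -
  have l: "pg_line (span2 p w)" using indep2_line[OF assms(1)] .
  have "span2 p w \<notin> secants Q" using tangent_notsec[OF assms(1) Qp assms(2)] assms(3) nsq_nz by blast
  moreover have "span2 p w \<notin> T1 Q" using notT1_witness[OF span2_r] assms(3) nsq_nz nsq_not_nz_square by blast
  moreover have "span1 p \<subseteq> span2 p w" using span1_sub_iff span2_l by blast
  ultimately show ?thesis using SC_iff[OF l] by blast
qed

lemma scale_one: "c \<noteq> 0 \<Longrightarrow> polar Q e ((1 / c) *s z) = polar Q e z / c"
  by (simp add: Qlin)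

end


context ell begin

lemma get_g: "\<exists>g. polar Q p g = 1"
proof -
  obtain z where z: "polar Q p z \<noteq> 0" using partner[OF p0] by blast
  have "polar Q p ((1 / polar Q p z) *s z) = 1" using z by (simp add: Qlin)
  then show ?thesis by blast
qed

lemma addv_polar: "addv (polar Q z)"
  unfolding addv_def by (simp add: polar_minus2[OF qf])

lemma point_out:
  assumes x0: "x \<noteq> 0"
  shows "\<exists>a b. indep2 a b \<and> x \<in> span2 a b \<and> span2 a b \<notin> SC"
proof (cases "polar Q p x = 0")
  case False
  have i: "indep2 p x" by (rule indep_by[OF Bpp False p0])
  have "span2 p x \<notin> SC" by (rule out_removed[OF indep2_line[OF i] span2_l span2_r False])
  then show ?thesis using i span2_r by blast
next
  case Bx: True
  show ?thesis
  proof (cases "\<exists>c. x = c *s p")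
    case True
    then obtain c where c: "x = c *s p" by blast
    obtain z where z: "polar Q p z \<noteq> 0" using partner[OF p0] by blast
    have i: "indep2 p z" by (rule indep_by[OF Bpp z p0])
    have "span2 p z \<notin> SC" by (rule out_removed[OF indep2_line[OF i] span2_l span2_r z])
    moreover have "x \<in> span2 p z" using c span2_mem[of c p 0 z] by simp
    ultimately show ?thesis using i by blast
  next
    case False
    have Qx: "Q x \<noteq> 0"
    proof
      assume "Q x = 0" then show False using sing_perp[OF Qp p0 _ Bx] False by blast
    qed
    obtain z where z: "polar Q p z \<noteq> 0" using partner[OF p0] by blast
    obtain g where g: "polar Q p g = 1" "polar Q x g = 0" "Q g = 0"
      using hyp_partner[OF subsp_UNIV _ _ _ Qp z Bx Qx] by blast
    obtain n :: 'a where n: "nsq n" using exists_nsq[OF oddq] by blast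
    define y where "y = (- (n * Q x)) *s p + g"
    have By: "polar Q p y = 1" unfolding y_def using g Bpp by (simp add: Qlin)
    have Bxp0: "polar Q x p = 0" using Bx polar_sym[OF qf] by metis
    have Bxy: "polar Q x y = 0" unfolding y_def using g Bxp0 by (simp add: polar_add2[OF qf] polar_minus2[OF qf] polar_smult2[OF qf])
    have gp: "polar Q g p = 1" using g polar_sym[OF qf] by metis
    have Qy: "Q y = - (n * Q x)" unfolding y_def using g Qp gp
      by (simp add: Q_minus[OF qf] Q_add[OF qf] Q_smult[OF qf] polar_smult1[OF qf] polar_smult2[OF qf])
    have i: "indep2 x y" by (rule indep_by[of p x y]) (use Bx By x0 in auto)
    have "span2 x y \<notin> SC"
      by (rule out_passant[OF indep2_line[OF i] passant_lemma[OF Bxy Qx Qy n] not_sub_tau[OF span2_r]])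
         (simp add: By)
    then show ?thesis using i span2_l by blast
  qed
qed

lemma point_in:
  assumes x0: "x \<noteq> 0"
  shows "\<exists>a b. indep2 a b \<and> x \<in> span2 a b \<and> span2 a b \<in> SC"
proof (cases "polar Q p x = 0")
  case Bx: True
  show ?thesis
  proof (cases "\<exists>c. x = c *s p")
    case True
    then obtain c where c: "x = c *s p" by blast
    obtain g where g: "polar Q p g = 1" using get_g by blast
    obtain u v where uv: "indep2 u v" "polar Q p u = 0" "polar Q g u = 0" "polar Q p v = 0" "polar Q g v = 0"
      using ker2_4_indep[OF addv_polar addv_polar] by blast
    have an: "aniso u v"
    proof (rule aniso_I[OF uv(1) uv(2) uv(4)])
      fix a b k assume h: "a *s u + b *s v = k *s p"
      have "polar Q g (a *s u + b *s v) = 0" using uv by (simp add: Qlin)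
      moreover have "polar Q g p = 1" using g polar_sym[OF qf] by metis
      then have "polar Q g (k *s p) = k" by (simp add: polar_smult2[OF qf])
      ultimately show "k = 0" using h by simp
    qed
    obtain s t where st: "Q (s *s u + t *s v) = 1" using aniso_rep[OF an] by fastforce
    define w where "w = s *s u + t *s v"
    have w: "Q w = 1" "polar Q p w = 0" "polar Q g w = 0"
      using st uv unfolding w_def by (auto simp: Qlin)
    have "w \<noteq> 0" using w(1) Q_zero[OF qf] by auto
    note w = w this
    have "polar Q g p \<noteq> 0" using g polar_sym[OF qf, of g p] by simp
    then have "indep2 w p" using indep_by[OF w(3) _ w(4)] by blast
    then have i: "indep2 p w" by (rule indep2_sym)
    have "span2 p w \<in> SC" by (rule in_T1[OF i w(2)]) (simp add: w(1) nz_square_def, rule exI[of _ 1], simp)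
    moreover have "x \<in> span2 p w" using c span2_mem[of c p 0 w] by simp
    ultimately show ?thesis using i by blast
  next
    case False
    have Qx: "Q x \<noteq> 0"
    proof
      assume "Q x = 0" then show False using sing_perp[OF Qp p0 _ Bx] False by blast
    qed
    obtain z where z: "polar Q p z \<noteq> 0" using partner[OF p0] by blast
    obtain g where g: "polar Q p g = 1" "polar Q x g = 0" "Q g = 0"
      using hyp_partner[OF subsp_UNIV _ _ _ Qp z Bx Qx] by blast
    obtain h where h: "h \<noteq> 0" "polar Q p h = 0" "polar Q x h = 0" "polar Q g h = 0"
      using ker3[OF addv_polar addv_polar addv_polar] by force
    have "polar Q x x \<noteq> 0" using Qx two_nz by (simp add: Qlin)
    then have "indep2 h x" using indep_by[OF h(3) _ h(1)] by blast
    then have i: "indep2 x h" by (rule indep2_sym)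
    have np: "p \<notin> span2 x h"
    proof
      assume "p \<in> span2 x h"
      then obtain a b where ab: "p = a *s x + b *s h" by (rule span2_memE)
      have "polar Q g p = a * polar Q g x + b * polar Q g h" unfolding ab by (simp add: Qlin)
      moreover have "polar Q g p = 1" "polar Q g x = 0" using g polar_sym[OF qf] by metis+
      ultimately show False using h(4) by simp
    qed
    have "span2 x h \<in> SC" by (rule in_added[OF i Bx h(2) np])
    then show ?thesis using i span2_l by blast
  qed
next
  case Bx: False
  have Bxp: "polar Q x p \<noteq> 0" using Bx polar_sym[OF qf] by metis
  obtain u v where uv: "indep2 u v" "polar Q x u = 0" "polar Q p u = 0" "polar Q x v = 0" "polar Q p v = 0"
    using ker2_4_indep[OF addv_polar addv_polar] by blast
  have an: "aniso u v"
  proof (rule aniso_I[OF uv(1) uv(3) uv(5)])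
    fix a b k assume h: "a *s u + b *s v = k *s p"
    have "polar Q x (a *s u + b *s v) = 0" using uv by (simp add: Qlin)
    then have "k * polar Q x p = 0" using h by (simp add: Qlin)
    then show "k = 0" using Bxp by simp
  qed
  have Qu: "Q u \<noteq> 0" using an unfolding aniso_def by (metis add.right_neutral vector_smult_lid vector_smult_lzero zero_neq_one)
  show ?thesis
  proof (cases "Q x = 0")
    case Qx: True
    define c where "c = - (Q u / polar Q x p)"
    define r where "r = x + c *s p + u"
    have Bup: "polar Q u p = 0" using uv polar_sym[OF qf] by metis
    have Qr: "Q r = 0" unfolding r_def c_def using Qx Qp Bxp uv Bup
      by (simp add: Q_add[OF qf] Q_minus[OF qf] Q_smult[OF qf] polar_add1[OF qf] polar_add2[OF qf] polar_smult1[OF qf]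
          polar_smult2[OF qf] polar_minus1[OF qf] polar_minus2[OF qf])
    have Bxr: "polar Q x r = - Q u" unfolding r_def c_def using Qx Bxp uv
      by (simp add: polar_add2[OF qf] polar_smult2[OF qf] polar_self[OF qf] polar_minus2[OF qf])
    have Bux: "polar Q u x = 0" using uv polar_sym[OF qf] by metis
    have Bur: "polar Q u r = 2 * Q u" unfolding r_def using Bux uv Bup
      by (simp add: polar_add2[OF qf] polar_smult2[OF qf] polar_self[OF qf] polar_minus2[OF qf])
    have Bur0: "polar Q u r \<noteq> 0" using Bur Qu two_nz by simp
    have i: "indep2 x r" by (rule indep_by[OF Bux Bur0 x0])
    have np: "p \<notin> span2 x r"
    proof
      assume "p \<in> span2 x r"
      then obtain a b where ab: "p = a *s x + b *s r" by (rule span2_memE)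
      have "polar Q u p = a * polar Q u x + b * polar Q u r" unfolding ab by (simp add: Qlin)
      then have "b * polar Q u r = 0" using Bux Bup by simp
      then have "b = 0" using Bur0 by simp
      then have "polar Q x p = a * polar Q x x" using ab by (simp add: Qlin)
      then show False using Bxp Qx by (simp add: Qlin)
    qed
    have "span2 x r \<in> SC"
      by (rule in_secant[OF indep2_line[OF i] secant_hyp[OF i Qx Qr] np]) (simp add: Bxr Qu)
    then show ?thesis using i span2_l by blast
  next
    case Qx: False
    obtain s t where st: "Q (s *s u + t *s v) = - Q x" using aniso_rep[OF an, of "- Q x"] Qx by auto
    define y where "y = s *s u + t *s v"
    have y: "Q y = - Q x" "polar Q x y = 0" "polar Q p y = 0"
      using st uv Qx unfolding y_def by (auto simp: Qlin)
    have "y \<noteq> 0" using y(1) Qx Q_zero[OF qf] by auto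
    note y = y this
    have "polar Q x x \<noteq> 0" using Qx two_nz by (simp add: Qlin)
    then have "indep2 y x" using indep_by[OF y(2) _ y(4)] by blast
    then have i: "indep2 x y" by (rule indep2_sym)
    have np: "p \<notin> span2 x y"
    proof
      assume "p \<in> span2 x y"
      then obtain a b where ab: "p = a *s x + b *s y" by (rule span2_memE)
      have "polar Q p p = polar Q p (a *s x + b *s y)" using ab by simp
      also have "\<dots> = a * polar Q p x + b * polar Q p y" by (rule polar_lin2[OF qf])
      finally have "polar Q p p = a * polar Q p x + b * polar Q p y" .
      then have "a = 0" using Bpp y Bx by simp
      then have "polar Q x p = b * polar Q x y" using ab by (simp add: Qlin)
      then show False using Bxp y by simp
    qed
    have "span2 x y \<in> SC"
      by (rule in_secant[OF indep2_line[OF i] secant_diff[OF i y(1) y(2) Qx] np])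
    then show ?thesis using i span2_l by blast
  qed
qed

end


context ell begin

lemma Bsym: "polar Q a b = polar Q b a" by (rule polar_sym[OF qf])

lemma plane_lines:
  assumes ind: "indep3 u v w"
  shows "(\<exists>a b. indep2 a b \<and> span2 a b \<subseteq> span3 u v w \<and> span2 a b \<in> SC) \<and>
         (\<exists>a b. indep2 a b \<and> span2 a b \<subseteq> span3 u v w \<and> span2 a b \<notin> SC)"
proof -
  let ?S = "span3 u v w"
  have S: "subsp ?S" by (rule subsp_span3)
  have addvB: "\<And>z x y. polar Q z (x - y) = polar Q z x - polar Q z y" by (rule polar_minus2[OF qf])
  show ?thesis
  proof (cases "p \<in> ?S")
    case pS: True
    show ?thesis
    proof (cases "\<forall>z\<in>?S. polar Q p z = 0")
      case A1: True
      obtain g where g: "polar Q p g = 1" using get_g by blast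
      have gp: "polar Q g p = 1" using g Bsym by metis
      obtain x y where xy: "x \<in> ?S" "y \<in> ?S" "indep2 x y" "polar Q g x = 0" "polar Q g y = 0"
        using kerP1_indep[OF ind polar_minus2[OF qf, of g]] by blast
      have px: "polar Q p x = 0" "polar Q p y = 0" using A1 xy by auto
      have np: "p \<notin> span2 x y"
      proof
        assume "p \<in> span2 x y"
        then obtain a b where ab: "p = a *s x + b *s y" by (rule span2_memE)
        have "polar Q g p = polar Q g (a *s x + b *s y)" using ab by simp
        also have "\<dots> = 0" using xy by (simp add: polar_lin2[OF qf])
        finally show False using gp by simp
      qed
      have in1: "span2 x y \<in> SC" by (rule in_added[OF xy(3) px np])
      have an: "aniso x y"
      proof (rule aniso_I[OF xy(3) px])
        fix a b k assume h: "a *s x + b *s y = k *s p"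
        have "polar Q g (a *s x + b *s y) = 0" using xy by (simp add: polar_lin2[OF qf])
        then show "k = 0" using h gp by (simp add: polar_smult2[OF qf])
      qed
      obtain n :: 'a where n: "nsq n" using exists_nsq[OF oddq] by blast
      obtain s t where st: "Q (s *s x + t *s y) = n" using aniso_rep[OF an nsq_nz[OF n]] by blast
      define w' where "w' = s *s x + t *s y"
      have w': "Q w' = n" "polar Q p w' = 0" "polar Q g w' = 0" "w' \<in> ?S"
        using st xy px S unfolding w'_def subsp_def by (auto simp: polar_lin2[OF qf])
      have "w' \<noteq> 0" using w'(1) nsq_nz[OF n] Q_zero[OF qf] by auto
      have "indep2 w' p" using indep_by[OF w'(3) _ \<open>w' \<noteq> 0\<close>] gp by simp
      then have i: "indep2 p w'" by (rule indep2_sym)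
      have out1: "span2 p w' \<notin> SC" by (rule out_tangentP1[OF i w'(2)]) (simp add: w'(1) n)
      show ?thesis using in1 out1 xy(1,2,3) i pS w'(4) subsp_span2[OF S] by blast
    next
      case A2: False
      then obtain z where z: "z \<in> ?S" "polar Q p z \<noteq> 0" by blast
      have iz: "indep2 p z" by (rule indep_by[OF Bpp z(2) p0])
      have out1: "span2 p z \<notin> SC" by (rule out_removed[OF indep2_line[OF iz] span2_l span2_r z(2)])
      obtain x y where xy: "x \<in> ?S" "y \<in> ?S" "indep2 x y" "polar Q p x = 0" "polar Q p y = 0"
        using kerP1_indep[OF ind polar_minus2[OF qf, of p]] by blast
      obtain f where f: "f \<in> ?S" "polar Q p f = 0" "\<not> (\<exists>c. f = c *s p)"
        using xy not_both_mult by metis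
      have Qf: "Q f \<noteq> 0"
      proof
        assume "Q f = 0" then show False using sing_perp[OF Qp p0 _ f(2)] f(3) by blast
      qed
      obtain g where g: "g \<in> ?S" "polar Q p g = 1" "polar Q f g = 0" "Q g = 0"
        using hyp_partner[OF S pS z(1) f(1) Qp z(2) f(2) Qf] by blast
      define s where "s = Q f"
      define y' where "y' = p - s *s g"
      have y'S: "y' \<in> ?S" unfolding y'_def by (rule subsp_diff[OF S pS subsp_scale[OF S g(1)]])
      have gp: "polar Q g p = 1" using g Bsym by metis
      have fp: "polar Q f p = 0" using f Bsym by metis
      have Qy': "Q y' = - Q f" unfolding y'_def s_def using g Qp
        by (simp add: Q_minus[OF qf] Q_smult[OF qf] polar_smult2[OF qf])
      have Bfy': "polar Q f y' = 0" unfolding y'_def using g fp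
        by (simp add: polar_minus2[OF qf] polar_smult2[OF qf])
      have Bpy': "polar Q p y' = - s" unfolding y'_def using g Bpp
        by (simp add: polar_minus2[OF qf] polar_smult2[OF qf])
      have f0: "f \<noteq> 0" using Qf Q_zero[OF qf] by auto
      have i: "indep2 f y'" by (rule indep_by[OF f(2) _ f0]) (use Bpy' Qf s_def in simp)
      have np: "p \<notin> span2 f y'"
      proof
        assume "p \<in> span2 f y'"
        then obtain a b where ab: "p = a *s f + b *s y'" by (rule span2_memE)
        have Bgy': "polar Q g y' = 1" unfolding y'_def using gp g polar_sing[OF g(4)]
          by (simp add: polar_minus2[OF qf] polar_smult2[OF qf])
        have "polar Q g p = polar Q g (a *s f + b *s y')" using ab by simp
        also have "\<dots> = b" using Bgy' g(3) Bsym[of g f] by (simp add: polar_lin2[OF qf])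
        finally have b1: "b = 1" using gp by simp
        have "polar Q f p = polar Q f (a *s f + b *s y')" using ab by simp
        also have "\<dots> = a * (2 * Q f)" using Bfy' by (simp add: polar_lin2[OF qf] polar_self[OF qf])
        finally have "a = 0" using fp Qf two_nz by simp
        then have "p = p - s *s g" using ab b1 unfolding y'_def by simp
        then have "s *s g = 0" by (simp add: vec_eq_iff)
        then have "g = 0" using Qf s_def by simp
        then show False using g(2) polar_zero2[OF qf] by simp
      qed
      have in1: "span2 f y' \<in> SC"
        by (rule in_secant[OF indep2_line[OF i] secant_diff[OF i Qy' Bfy' Qf] np])
      show ?thesis using in1 out1 i iz f(1) y'S pS z(1) subsp_span2[OF S] by blast
    qed
  next
    case pS: False
    obtain x y where xy: "x \<in> ?S" "y \<in> ?S" "indep2 x y" "polar Q p x = 0" "polar Q p y = 0"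
      using kerP1_indep[OF ind polar_minus2[OF qf, of p]] by blast
    have xyS: "span2 x y \<subseteq> ?S" by (rule subsp_span2[OF S xy(1,2)])
    have np: "p \<notin> span2 x y" using xyS pS by blast
    have in1: "span2 x y \<in> SC" by (rule in_added[OF xy(3) xy(4,5) np])
    have kS: "k *s p \<in> ?S \<Longrightarrow> k = 0" for k
    proof (rule ccontr)
      assume "k *s p \<in> ?S" "k \<noteq> 0"
      then have "(1 / k) *s (k *s p) \<in> ?S" using subsp_scale[OF S] by blast
      then show False using \<open>k \<noteq> 0\<close> pS by (simp add: vector_smult_assoc)
    qed
    have an: "aniso x y"
    proof (rule aniso_I[OF xy(3) xy(4,5)])
      fix a b k assume h: "a *s x + b *s y = k *s p"
      have "a *s x + b *s y \<in> ?S" using S xy unfolding subsp_def by blast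
      then show "k = 0" using h kS by simp
    qed
    obtain w where w: "w \<in> ?S" "w \<noteq> 0" "polar Q x w = 0" "polar Q y w = 0"
      using kerP2[OF ind polar_minus2[OF qf, of x] polar_minus2[OF qf, of y]] by blast
    obtain e where e: "e \<in> ?S" "e \<noteq> 0" "Q e = 0"
    proof (cases "Q w = 0")
      case True then show ?thesis using that w by blast
    next
      case False
      obtain s t where st: "Q (s *s x + t *s y) = - Q w" using aniso_rep[OF an, of "- Q w"] False by auto
      define v' where "v' = s *s x + t *s y"
      have v'S: "v' \<in> ?S" using S xy unfolding subsp_def v'_def by blast
      have Bv'w: "polar Q v' w = 0" unfolding v'_def using w by (simp add: polar_lin1[OF qf])
      have Qe: "Q (v' + w) = 0" using st Bv'w unfolding v'_def[symmetric] by (simp add: Q_add[OF qf])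
      have "v' + w \<noteq> 0"
      proof
        assume "v' + w = 0"
        then have "v' = (-1) *s w" by (simp add: vec_eq_iff add_eq_0_iff)
        then have "Q v' = Q w" using Q_smult[OF qf, of "-1" w] by simp
        then have "2 * Q w = 0" using st v'_def by simp
        then show False using False two_nz by simp
      qed
      then show ?thesis using that[of "v' + w"] Qe subsp_add[OF S v'S w(1)] by blast
    qed
    have Bpe: "polar Q p e \<noteq> 0"
    proof
      assume "polar Q p e = 0"
      then obtain k where k: "e = k *s p" using sing_perp[OF Qp p0 e(3)] by blast
      then have "k = 0" using kS e(1) by simp
      then show False using k e(2) by simp
    qed
    have nt: "\<not> span2 e z \<subseteq> tau" for z by (rule not_sub_tau[OF span2_l Bpe])
    obtain n :: 'a where n: "nsq n" using exists_nsq[OF oddq] by blast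
    show ?thesis
    proof (cases "\<forall>z\<in>?S. polar Q e z = 0")
      case B1: True
      obtain s t where st: "Q (s *s x + t *s y) = n" using aniso_rep[OF an nsq_nz[OF n]] by blast
      define w' where "w' = s *s x + t *s y"
      have w': "Q w' = n" "polar Q p w' = 0" "w' \<in> ?S"
        using st xy S unfolding w'_def subsp_def by (auto simp: polar_lin2[OF qf])
      have "w' \<noteq> 0" using w'(1) nsq_nz[OF n] Q_zero[OF qf] by auto
      have "indep2 w' e" by (rule indep_by[OF w'(2) Bpe \<open>w' \<noteq> 0\<close>])
      then have i: "indep2 e w'" by (rule indep2_sym)
      have Bew: "polar Q e w' = 0" using B1 w'(3) by blast
      have out1: "span2 e w' \<notin> SC" by (rule out_tangent[OF i e(3) Bew _ nt]) (simp add: w'(1) n)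
      show ?thesis using in1 out1 xy(3) xyS i e(1) w'(3) subsp_span2[OF S] by blast
    next
      case B2: False
      then obtain z where z: "z \<in> ?S" "polar Q e z \<noteq> 0" by blast
      obtain x2 y2 where xy2: "x2 \<in> ?S" "y2 \<in> ?S" "indep2 x2 y2" "polar Q e x2 = 0" "polar Q e y2 = 0"
        using kerP1_indep[OF ind polar_minus2[OF qf, of e]] by blast
      obtain f0 where f0: "f0 \<in> ?S" "polar Q e f0 = 0" "\<not> (\<exists>c. f0 = c *s e)"
        using xy2 not_both_mult by metis
      have Qf0: "Q f0 \<noteq> 0"
      proof
        assume "Q f0 = 0" then show False using sing_perp[OF e(3) e(2) _ f0(2)] f0(3) by blast
      qed
      obtain f where f: "f \<in> ?S" "polar Q e f = 0" "Q f \<noteq> 0" "polar Q p f \<noteq> 0"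
      proof (cases "polar Q p f0 = 0")
        case False then show ?thesis using that f0 Qf0 by blast
      next
        case True
        have "polar Q e (f0 + e) = 0" using f0 polar_sing[OF e(3)] by (simp add: polar_add2[OF qf])
        moreover have "Q (f0 + e) = Q f0" using e(3) f0(2) Bsym[of f0 e] by (simp add: Q_add[OF qf])
        moreover have "polar Q p (f0 + e) \<noteq> 0" using True Bpe by (simp add: polar_add2[OF qf])
        ultimately show ?thesis using that[of "f0 + e"] subsp_add[OF S f0(1) e(1)] Qf0 by auto
      qed
      obtain g where g: "g \<in> ?S" "polar Q e g = 1" "polar Q f g = 0" "Q g = 0"
        using hyp_partner[OF S e(1) z(1) f(1) e(3) z(2) f(2) f(3)] by blast
      define c where "c = - (n * Q f)"
      have c0: "c \<noteq> 0" unfolding c_def using nsq_nz[OF n] f(3) by simp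
      define y' where "y' = e + c *s g"
      have y'S: "y' \<in> ?S" unfolding y'_def by (rule subsp_add[OF S e(1) subsp_scale[OF S g(1)]])
      have fe: "polar Q f e = 0" using f Bsym by metis
      have Qy': "Q y' = - (n * Q f)" unfolding y'_def using g e(3)
        by (simp add: Q_add[OF qf] Q_minus[OF qf] Q_smult[OF qf] polar_smult2[OF qf] c_def)
      have Bfy': "polar Q f y' = 0" unfolding y'_def using g fe
        by (simp add: polar_add2[OF qf] polar_smult2[OF qf] polar_minus2[OF qf])
      have Bey': "polar Q e y' = c" unfolding y'_def using g polar_sing[OF e(3)]
        by (simp add: polar_add2[OF qf] polar_smult2[OF qf] polar_minus2[OF qf])
      have fnz: "f \<noteq> 0" using f(3) Q_zero[OF qf] by auto
      have i: "indep2 f y'" by (rule indep_by[OF f(2) _ fnz]) (simp add: Bey' c0)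
      have out1: "span2 f y' \<notin> SC"
        by (rule out_passant[OF indep2_line[OF i] passant_lemma[OF Bfy' f(3) Qy' n] not_sub_tau[OF span2_l f(4)]])
      show ?thesis using in1 out1 xy(3) xyS i f(1) y'S subsp_span2[OF S] by blast
    qed
  qed
qed

end


theorem mainTheorem8:
  fixes Q :: "('a::{finite,field}) ^ 4 \<Rightarrow> 'a" and P1 :: "('a ^ 4) set"
  assumes "odd CARD('a)"
    and "elliptic_form Q"
    and "P1 \<in> quadric_points Q"
  shows "(\<forall>\<pi>. pg_plane \<pi> \<longrightarrow>
            \<not> (Line \<pi> \<subseteq> switched_class Q P1) \<and> Line \<pi> \<inter> switched_class Q P1 \<noteq> {}) \<and>
         (\<forall>P. pg_point P \<longrightarrow>
            \<not> (Star P \<subseteq> switched_class Q P1) \<and> Star P \<inter> switched_class Q P1 \<noteq> {})"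
proof -
  obtain p where p: "p \<noteq> 0" "P1 = span1 p"
    using assms(3) unfolding quadric_points_def pg_point_def by blast
  have Qp: "Q p = 0" using assms(3) p span1_self unfolding quadric_points_def by blast
  interpret E: ell Q p using assms(1,2) p(1) Qp by unfold_locales
  have SC: "switched_class Q P1 = E.SC" unfolding E.SC_def p(2) ..
  show ?thesis
  proof (intro conjI allI impI)
    fix \<pi> :: "'a vec4 set" assume "pg_plane \<pi>"
    then obtain u v w where uvw: "indep3 u v w" "\<pi> = span3 u v w" unfolding pg_plane_def by blast
    from E.plane_lines[OF uvw(1)] obtain a b c d where
      ab: "indep2 a b" "span2 a b \<subseteq> \<pi>" "span2 a b \<in> E.SC" and
      cd: "indep2 c d" "span2 c d \<subseteq> \<pi>" "span2 c d \<notin> E.SC"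
      unfolding uvw(2) by blast
    have "span2 a b \<in> Line \<pi>" "span2 c d \<in> Line \<pi>"
      unfolding Line_def using ab cd indep2_line by blast+
    then show "\<not> Line \<pi> \<subseteq> switched_class Q P1" "Line \<pi> \<inter> switched_class Q P1 \<noteq> {}"
      unfolding SC using ab(3) cd(3) by blast+
  next
    fix P :: "'a vec4 set" assume "pg_point P"
    then obtain x where x: "x \<noteq> 0" "P = span1 x" unfolding pg_point_def by blast
    obtain a b where ab: "indep2 a b" "x \<in> span2 a b" "span2 a b \<in> E.SC" using E.point_in[OF x(1)] by blast
    obtain c d where cd: "indep2 c d" "x \<in> span2 c d" "span2 c d \<notin> E.SC" using E.point_out[OF x(1)] by blast
    have "span2 a b \<in> Star P" "span2 c d \<in> Star P"
      unfolding Star_def x(2) using ab cd indep2_line span1_sub_iff by blast+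
    then show "\<not> Star P \<subseteq> switched_class Q P1" "Star P \<inter> switched_class Q P1 \<noteq> {}"
      unfolding SC using ab(3) cd(3) by blast+
  qed
qed


end
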